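(* Let $D$ be a convex subset of a topological vector space $X$, $K$ a nonempty set, and $C$ a cone in a topological vector space $Y$. Let $f: D\times K\rightrightarrows Y$ and $g: D\times D\rightrightarrows Y$ be set-valued mappings satisfying: (i) for each $y\in K$, the set $\{x\in D: f(x,y)\subseteq C\}$ is compactly closed; (ii) for any nonempty finite subset $A$ of $D$ and all $z\in\operatorname{co}(A)$, there exists $x\in A$ such that $g(x,z)\subseteq -C$; (iii) for each $y\in K$ there exists $z\in D$ such that for all $x\in D$, $g(z,x)\subseteq -C$ implies $f(x,y)\subseteq C$; (iv) there exist a nonempty compact subset $M$ of $D$ and a finite subset $L$ of $K$ such that for each $x\in D\setminus M$ there exists $y\in L$ with $f(x,y)\not\subseteq C$. Then there exists $\bar x\in M$ such that $f(\bar x,y)\subseteq C$ for all $y\in K$.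
   Context: A subset $A$ of a topological space $X$ is compactly closed if for every compact subset $M$ of $X$ the set $A\cap M$ is closed in $M$. $\operatorname{co}(A)$ denotes the convex hull of $A$. *)

theory Defs
  imports "HOL-Analysis.Analysis"
begin

definition tvs :: "'a::{real_vector,topological_space} itself \<Rightarrow> bool" where
  "tvs _ \<longleftrightarrow>
     continuous_on (UNIV :: ('a \<times> 'a) set) (\<lambda>p. fst p + snd p) \<and>
     continuous_on (UNIV :: (real \<times> 'a) set) (\<lambda>p. fst p *\<^sub>R snd p)"

definition compactly_closed :: "'a::topological_space set \<Rightarrow> bool" where
  "compactly_closed A \<longleftrightarrow> (\<forall>M. compact M \<longrightarrow> closedin (top_of_set M) (A \<inter> M))"

end

theory Submission imports Defs "HOL-Homology.Homology" begin

lemma nsphere_top: "nsphere n = top_of_set {x::nat\<Rightarrow>real. (\<Sum>i\<le>n. x i ^ 2) = 1 \<and> (\<forall>i>n. x i = 0)}"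
  by (simp add: nsphere euclidean_product_topology)

lemma contractible_sphere_nat: "\<not> contractible {x::nat\<Rightarrow>real. (\<Sum>i\<le>n. x i ^ 2) = 1 \<and> (\<forall>i>n. x i = 0)}"
  using non_contractible_space_nsphere[of n] by (simp add: nsphere_top)

definition nn :: "nat \<Rightarrow> (nat \<Rightarrow> real) \<Rightarrow> real" where
  "nn n x = (\<Sum>i\<le>n. x i ^ 2)"

definition nrm :: "nat \<Rightarrow> (nat \<Rightarrow> real) \<Rightarrow> (nat \<Rightarrow> real)" where
  "nrm n v = (\<lambda>i. v i / sqrt (nn n v))"

lemma nn_nonneg: "nn n x \<ge> 0" unfolding nn_def by (simp add: sum_nonneg)

lemma nn_scale: "nn n (\<lambda>i. t * x i) = t^2 * nn n x"
  unfolding nn_def by (simp add: sum_distrib_left power_mult_distrib)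

lemma nn_pos: assumes "\<forall>i>n. v i = 0" "v \<noteq> (\<lambda>i. 0)" shows "nn n v > 0"
proof -
  obtain j where j: "v j \<noteq> 0" using assms(2) by auto
  then have jn: "j \<le> n" using assms(1) by (meson not_le)
  have "v j ^ 2 \<le> nn n v" unfolding nn_def
    by (rule member_le_sum) (use jn in auto)
  moreover have "v j ^ 2 > 0" using j by simp
  ultimately show ?thesis by linarith
qed

lemma nn_nrm: assumes "nn n v > 0" shows "nn n (nrm n v) = 1"
proof -
  have "nn n (nrm n v) = (\<Sum>i\<le>n. (v i / sqrt (nn n v)) ^ 2)"
    by (simp add: nn_def nrm_def)
  also have "\<dots> = (\<Sum>i\<le>n. v i ^ 2 / nn n v)"
    using nn_nonneg[of n v] by (simp add: power_divide)
  also have "\<dots> = (\<Sum>i\<le>n. v i ^ 2) / nn n v" by (rule sum_divide_distrib[symmetric])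
  also have "\<dots> = 1" using assms unfolding nn_def by simp
  finally show ?thesis .
qed

lemma cont_nn: "continuous_on S (nn n)"
proof -
  have "continuous_on S (\<lambda>x::nat\<Rightarrow>real. x i)" for i
    by (rule continuous_on_subset[OF continuous_on_product_coordinates]) auto
  then show ?thesis unfolding nn_def by (intro continuous_intros)
qed

lemma cont_nrm:
  assumes "continuous_on S w" "\<And>p. p \<in> S \<Longrightarrow> nn n (w p) > 0"
  shows "continuous_on S (\<lambda>p. nrm n (w p))"
  unfolding nrm_def
proof (intro continuous_on_coordinatewise_then_product continuous_on_divide)
  fix i
  show "continuous_on S (\<lambda>x. w x i)" by (rule continuous_on_product_then_coordinatewise[OF assms(1)])
  show "continuous_on S (\<lambda>x. sqrt (nn n (w x)))"
    by (intro continuous_intros continuous_on_compose2[OF cont_nn assms(1)]) auto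
  show "\<forall>x\<in>S. sqrt (nn n (w x)) \<noteq> 0" using assms(2) by force
qed

lemma nrm_sph:
  assumes "nn n v > 0" "\<forall>i>n. v i = 0"
  shows "nrm n v \<in> {x::nat\<Rightarrow>real. (\<Sum>i\<le>n. x i ^ 2) = 1 \<and> (\<forall>i>n. x i = 0)}"
  using nn_nrm[OF assms(1)] assms(2) unfolding nn_def nrm_def by auto

lemma brouwer_nat:
  fixes F :: "(nat \<Rightarrow> real) \<Rightarrow> (nat \<Rightarrow> real)" and n :: nat
  defines "Bl \<equiv> {x. nn n x \<le> 1 \<and> (\<forall>i>n. x i = 0)}"
  assumes contF: "continuous_on Bl F" and FB: "F ` Bl \<subseteq> Bl"
  shows "\<exists>x\<in>Bl. F x = x"
proof (rule ccontr)
  assume nofix: "\<not> (\<exists>x\<in>Bl. F x = x)"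
  define Sph where "Sph = {x::nat\<Rightarrow>real. (\<Sum>i\<le>n. x i ^ 2) = 1 \<and> (\<forall>i>n. x i = 0)}"
  have SphB: "Sph \<subseteq> Bl" unfolding Sph_def Bl_def nn_def by auto
  have Fz: "F x i = 0" if "x \<in> Bl" "i > n" for x i
    using FB that unfolding Bl_def by auto
  have Fnn: "nn n (F x) \<le> 1" if "x \<in> Bl" for x
    using FB that unfolding Bl_def by auto
  have Hpos: "nn n (\<lambda>i. x i - t * F x i) > 0" if "t \<in> {0..1}" "x \<in> Sph" for t x
  proof (rule nn_pos)
    show "\<forall>i>n. x i - t * F x i = 0" using that SphB Fz unfolding Sph_def by auto
    show "(\<lambda>i. x i - t * F x i) \<noteq> (\<lambda>i. 0)"
    proof
      assume eq: "(\<lambda>i. x i - t * F x i) = (\<lambda>i. 0)"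
      have xi: "x i = t * F x i" for i using fun_cong[OF eq, of i] by simp
      have xe: "x = (\<lambda>i. t * F x i)" by (rule ext) (rule xi)
      have "nn n x = 1" using that unfolding Sph_def nn_def by auto
      moreover have "nn n x = nn n (\<lambda>i. t * F x i)" using xe by (rule arg_cong)
      ultimately have 1: "1 = t^2 * nn n (F x)" using nn_scale[of n t "F x"] by simp
      moreover have "t^2 \<le> 1" using that by (simp add: power_le_one)
      moreover have "x \<in> Bl" using that SphB by auto
      moreover have "nn n (F x) \<le> 1" using Fnn \<open>x \<in> Bl\<close> by auto
      moreover have "t^2 * nn n (F x) \<le> t^2 * 1"
        by (rule mult_left_mono) (use Fnn \<open>x \<in> Bl\<close> in auto)
      ultimately have "t^2 = 1" by linarith
      then have "t = 1" using that by (simp add: power2_eq_1_iff)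
      then have "F x = x" using xi by (simp add: fun_eq_iff)
      then show False using nofix \<open>x \<in> Bl\<close> by auto
    qed
  qed
  have Kpos: "nn n (\<lambda>i. s * x i - F (\<lambda>j. s * x j) i) > 0" if "s \<in> {0..1}" "x \<in> Sph" for s x
  proof (rule nn_pos)
    have sB: "(\<lambda>j. s * x j) \<in> Bl"
    proof -
      have "nn n x = 1" using that unfolding Sph_def nn_def by auto
      moreover have "s^2 \<le> 1" using that by (simp add: power_le_one)
      ultimately have "nn n (\<lambda>j. s * x j) \<le> 1" by (simp only: nn_scale)
      then show ?thesis using that unfolding Bl_def Sph_def by auto
    qed
    show "\<forall>i>n. s * x i - F (\<lambda>j. s * x j) i = 0"
    proof (intro allI impI)
      fix i assume "n < i"
      then show "s * x i - F (\<lambda>j. s * x j) i = 0" using that Fz[OF sB \<open>n < i\<close>] unfolding Sph_def by simp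
    qed
    show "(\<lambda>i. s * x i - F (\<lambda>j. s * x j) i) \<noteq> (\<lambda>i. 0)"
    proof
      assume "(\<lambda>i. s * x i - F (\<lambda>j. s * x j) i) = (\<lambda>i. 0)"
      then have "F (\<lambda>j. s * x j) = (\<lambda>j. s * x j)"
        by (metis (no_types, lifting) eq_iff_diff_eq_0 ext)
      then show False using nofix sB by blast
    qed
  qed
  have sB: "(\<lambda>j. s * x j) \<in> Bl" if "s \<in> {0..1}" "x \<in> Sph" for s x
  proof -
    have "nn n x = 1" using that unfolding Sph_def nn_def by auto
    moreover have "s^2 \<le> 1" using that by (simp add: power_le_one)
    ultimately have "nn n (\<lambda>j. s * x j) \<le> 1" by (simp only: nn_scale)
    then show ?thesis using that unfolding Bl_def Sph_def by auto
  qed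
  have crd: "continuous_on S (\<lambda>p. g p i)" if "continuous_on S g" for S and g :: "_ \<Rightarrow> nat \<Rightarrow> real" and i
    by (rule continuous_on_product_then_coordinatewise[OF that])
  have contFS: "continuous_on ({0..1::real} \<times> Sph) (\<lambda>p. F (snd p))"
    by (rule continuous_on_compose2[OF contF continuous_on_snd]) (use SphB in auto)
  have contG: "continuous_on ({0..1::real} \<times> Sph) (\<lambda>p. (\<lambda>j. fst p * snd p j))"
    by (intro continuous_on_coordinatewise_then_product continuous_intros crd[OF continuous_on_snd])
  have contFG: "continuous_on ({0..1::real} \<times> Sph) (\<lambda>p. F (\<lambda>j. fst p * snd p j))"
    by (rule continuous_on_compose2[OF contF contG]) (use sB in auto)
  define H where "H = (\<lambda>p::real\<times>(nat\<Rightarrow>real). nrm n (\<lambda>i. snd p i - fst p * F (snd p) i))"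
  define K where "K = (\<lambda>p::real\<times>(nat\<Rightarrow>real). nrm n (\<lambda>i. fst p * snd p i - F (\<lambda>j. fst p * snd p j) i))"
  have contH: "continuous_on ({0..1} \<times> Sph) H"
    unfolding H_def
  proof (rule cont_nrm)
    show "continuous_on ({0..1} \<times> Sph) (\<lambda>p i. snd p i - fst p * F (snd p) i)"
      by (intro continuous_on_coordinatewise_then_product continuous_intros crd[OF continuous_on_snd] crd[OF contFS])
    show "0 < nn n (\<lambda>i. snd p i - fst p * F (snd p) i)" if "p \<in> {0..1} \<times> Sph" for p
      using Hpos that by auto
  qed
  have contK: "continuous_on ({0..1} \<times> Sph) K"
    unfolding K_def
  proof (rule cont_nrm)
    show "continuous_on ({0..1} \<times> Sph) (\<lambda>p i. fst p * snd p i - F (\<lambda>j. fst p * snd p j) i)"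
      by (intro continuous_on_coordinatewise_then_product continuous_intros crd[OF continuous_on_snd] crd[OF contFG])
    show "0 < nn n (\<lambda>i. fst p * snd p i - F (\<lambda>j. fst p * snd p j) i)" if "p \<in> {0..1} \<times> Sph" for p
      using Kpos that by auto
  qed
  have HS: "H p \<in> Sph" if "p \<in> {0..1} \<times> Sph" for p
    unfolding H_def Sph_def
  proof (rule nrm_sph)
    show "0 < nn n (\<lambda>i. snd p i - fst p * F (snd p) i)" using Hpos that by auto
    show "\<forall>i>n. snd p i - fst p * F (snd p) i = 0" using that SphB Fz unfolding Sph_def by auto
  qed
  have KS: "K p \<in> Sph" if "p \<in> {0..1} \<times> Sph" for p
    unfolding K_def Sph_def
  proof (rule nrm_sph)
    show "0 < nn n (\<lambda>i. fst p * snd p i - F (\<lambda>j. fst p * snd p j) i)" using Kpos that by auto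
    have "(\<lambda>j. fst p * snd p j) \<in> Bl" using sB that by auto
    then show "\<forall>i>n. fst p * snd p i - F (\<lambda>j. fst p * snd p j) i = 0"
      using that Fz unfolding Sph_def by auto
  qed
  have H0: "H (0, x) = x" if "x \<in> Sph" for x
  proof -
    have "nn n x = 1" using that unfolding Sph_def nn_def by auto
    then show ?thesis unfolding H_def nrm_def by simp
  qed
  have H1: "H (1, x) = K (1, x)" for x unfolding H_def K_def by simp
  have K0: "K (0, x) = K (0, y)" for x y unfolding K_def by simp
  have h1: "homotopic_with_canon (\<lambda>x. True) Sph Sph id (\<lambda>x. H (1, x))"
    apply (rule iffD2[OF homotopic_with], simp)
    by (rule exI[of _ H]) (use contH HS H0 in auto)
  have h2: "homotopic_with_canon (\<lambda>x. True) Sph Sph (\<lambda>x. H (1, x)) (\<lambda>x. K (0, undefined))"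
    apply (rule iffD2[OF homotopic_with], simp)
  proof (rule exI[of _ "\<lambda>p. K (1 - fst p, snd p)"], intro conjI ballI)
    have "continuous_on ({0..1} \<times> Sph) (\<lambda>p. K (1 - fst p, snd p))"
      by (rule continuous_on_compose2[OF contK]) (auto intro!: continuous_intros crd[OF continuous_on_snd])
    moreover have "(\<lambda>p. K (1 - fst p, snd p)) \<in> {0..1} \<times> Sph \<rightarrow> Sph" using KS by auto
    ultimately show "continuous_map (prod_topology (top_of_set {0..1}) (top_of_set Sph)) (top_of_set Sph) (\<lambda>p. K (1 - fst p, snd p))"
      by simp
  qed (auto simp: H1 K0)
  have "contractible Sph"
    unfolding contractible_def using homotopic_with_trans[OF h1 h2] by blast
  then show False using contractible_sphere_nat[of n] unfolding Sph_def by blast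
qed

definition simp_n :: "nat \<Rightarrow> (nat \<Rightarrow> real) set" where
  "simp_n n = {x. (\<forall>i. 0 \<le> x i) \<and> (\<forall>i>n. x i = 0) \<and> (\<Sum>i\<le>n. x i) = 1}"

lemma simp_n_le1: assumes "x \<in> simp_n n" "i \<le> n" shows "x i \<le> 1"
proof -
  have "x i \<le> (\<Sum>i\<le>n. x i)" by (rule member_le_sum) (use assms in \<open>auto simp: simp_n_def\<close>)
  then show ?thesis using assms by (simp add: simp_n_def)
qed

lemma simp_n_ball: assumes "x \<in> simp_n n" shows "nn n x \<le> 1"
proof -
  have "nn n x \<le> (\<Sum>i\<le>n. x i)" unfolding nn_def
  proof (rule sum_mono)
    fix i assume "i \<in> {..n}"
    then have "0 \<le> x i" "x i \<le> 1" using assms simp_n_le1[OF assms] by (auto simp: simp_n_def)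
    then show "x i ^ 2 \<le> x i" by (simp add: power2_eq_square mult_left_le)
  qed
  then show ?thesis using assms by (simp add: simp_n_def)
qed

definition rtr :: "nat \<Rightarrow> (nat \<Rightarrow> real) \<Rightarrow> (nat \<Rightarrow> real)" where
  "rtr n x = (let P = (\<Sum>j\<le>n. max (x j) 0); d = max 0 (1 - P) in
     (\<lambda>i. if i \<le> n then (max (x i) 0 + d) / (P + real (Suc n) * d) else 0))"

lemma rtr_den: "(\<Sum>j\<le>n. max (x j) 0) + real (Suc n) * max 0 (1 - (\<Sum>j\<le>n. max (x j) 0)) \<ge> 1"
proof (cases "(\<Sum>j\<le>n. max (x j) (0::real)) \<ge> 1")
  case True then show ?thesis by simp
next
  case False
  define P where "P = (\<Sum>j\<le>n. max (x j) (0::real))"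
  have "max 0 (1 - P) = 1 - P" using False by (simp add: P_def)
  moreover have "1 * (1 - P) \<le> real (Suc n) * (1 - P)"
    by (rule mult_right_mono) (use False in \<open>auto simp: P_def\<close>)
  ultimately show ?thesis by (simp add: P_def)
qed

lemma rtr_simp: "rtr n x \<in> simp_n n"
proof -
  define P where "P = (\<Sum>j\<le>n. max (x j) (0::real))"
  define d where "d = max 0 (1 - P)"
  have den: "P + real (Suc n) * d \<ge> 1" using rtr_den[of x n] by (simp add: P_def d_def)
  have r: "rtr n x = (\<lambda>i. if i \<le> n then (max (x i) 0 + d) / (P + real (Suc n) * d) else 0)"
    unfolding rtr_def Let_def P_def d_def by (rule refl)
  have "(\<Sum>i\<le>n. rtr n x i) = (\<Sum>i\<le>n. (max (x i) 0 + d) / (P + real (Suc n) * d))"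
    by (simp add: r)
  also have "\<dots> = (\<Sum>i\<le>n. (max (x i) 0 + d)) / (P + real (Suc n) * d)"
    by (rule sum_divide_distrib[symmetric])
  also have "(\<Sum>i\<le>n. (max (x i) 0 + d)) = P + real (Suc n) * d"
    by (simp add: sum.distrib P_def)
  finally have "(\<Sum>i\<le>n. rtr n x i) = 1" using den by simp
  moreover have "0 \<le> rtr n x i" for i
    using den unfolding r d_def by auto
  moreover have "rtr n x i = 0" if "i > n" for i using that by (simp add: r)
  ultimately show ?thesis by (simp add: simp_n_def)
qed

lemma rtr_id: assumes "x \<in> simp_n n" shows "rtr n x = x"
proof -
  have P: "(\<Sum>j\<le>n. max (x j) (0::real)) = 1"
    using assms by (simp add: simp_n_def max_absorb1)
  show ?thesis
    using assms unfolding rtr_def Let_def P by (auto simp: simp_n_def fun_eq_iff max_absorb1 not_le)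
qed

lemma cont_rtr: "continuous_on S (rtr n)"
proof -
  have c: "continuous_on S (\<lambda>x::nat\<Rightarrow>real. x i)" for i
    by (rule continuous_on_subset[OF continuous_on_product_coordinates]) auto
  show ?thesis
    unfolding rtr_def Let_def
  proof (intro continuous_on_coordinatewise_then_product)
    fix i
    show "continuous_on S (\<lambda>x. if i \<le> n then (max (x i) 0 + max 0 (1 - (\<Sum>j\<le>n. max (x j) 0))) /
       ((\<Sum>j\<le>n. max (x j) 0) + real (Suc n) * max 0 (1 - (\<Sum>j\<le>n. max (x j) 0))) else 0)"
    proof (cases "i \<le> n")
      case True
      have "continuous_on S (\<lambda>x. (max (x i) 0 + max 0 (1 - (\<Sum>j\<le>n. max (x j) 0))) /
       ((\<Sum>j\<le>n. max (x j) 0) + real (Suc n) * max 0 (1 - (\<Sum>j\<le>n. max (x j) 0))))"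
        using rtr_den[of _ n] by (intro continuous_intros c) (smt (verit))
      then show ?thesis using True by simp
    qed simp
  qed
qed

lemma kkm_nat:
  fixes E :: "nat \<Rightarrow> (nat \<Rightarrow> real) set" and n :: nat
  assumes clE: "\<And>i. i \<le> n \<Longrightarrow> closed (E i)"
    and kkm: "\<And>x. x \<in> simp_n n \<Longrightarrow> \<exists>i\<le>n. 0 < x i \<and> x \<in> E i"
  shows "\<exists>x\<in>simp_n n. \<forall>i\<le>n. x \<in> E i"
proof (rule ccontr)
  assume no: "\<not> (\<exists>x\<in>simp_n n. \<forall>i\<le>n. x \<in> E i)"
  have Ene: "E i \<noteq> {}" if "i \<le> n" for i
  proof -
    define e where "e = (\<lambda>j. if j = i then 1 else 0::real)"
    have "e \<in> simp_n n" using that by (auto simp: simp_n_def e_def)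
    then obtain j where "j \<le> n" "0 < e j" "e \<in> E j" using kkm by blast
    then have "j = i" by (auto simp: e_def split: if_splits)
    then show ?thesis using \<open>e \<in> E j\<close> by auto
  qed
  define S where "S x = (\<Sum>i\<le>n. infdist x (E i))" for x
  have Spos: "S x > 0" if "x \<in> simp_n n" for x
  proof -
    have "S x \<ge> 0" unfolding S_def by (simp add: sum_nonneg infdist_nonneg)
    moreover have "S x \<noteq> 0"
    proof
      assume "S x = 0"
      then have "\<forall>i\<in>{..n}. infdist x (E i) = 0"
        unfolding S_def by (subst sum_nonneg_eq_0_iff[symmetric]) (auto simp: infdist_nonneg)
      then have "\<forall>i\<le>n. x \<in> E i" using in_closed_iff_infdist_zero[OF clE Ene] by auto
      then show False using no that by blast
    qed
    ultimately show ?thesis by linarith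
  qed
  define h where "h x = (\<lambda>i. if i \<le> n then infdist x (E i) / S x else 0)" for x
  have hS: "h x \<in> simp_n n" if "x \<in> simp_n n" for x
  proof -
    have "(\<Sum>i\<le>n. h x i) = (\<Sum>i\<le>n. infdist x (E i) / S x)" by (simp add: h_def)
    also have "\<dots> = S x / S x" unfolding S_def by (rule sum_divide_distrib[symmetric])
    also have "\<dots> = 1" using Spos[OF that] by simp
    finally show ?thesis using Spos[OF that]
      by (auto simp: simp_n_def h_def infdist_nonneg)
  qed
  have conth: "continuous_on (simp_n n) h"
    unfolding h_def
  proof (intro continuous_on_coordinatewise_then_product)
    fix i
    show "continuous_on (simp_n n) (\<lambda>x. if i \<le> n then infdist x (E i) / S x else 0)"
    proof (cases "i \<le> n")
      case True
      have "continuous_on (simp_n n) (\<lambda>x. infdist x (E i) / S x)"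
        unfolding S_def using Spos unfolding S_def
        by (intro continuous_intros continuous_on_id) force
      then show ?thesis using True by simp
    qed simp
  qed
  define Bl where "Bl = {x. nn n x \<le> 1 \<and> (\<forall>i>n. x i = 0)}"
  have simpB: "simp_n n \<subseteq> Bl" using simp_n_ball unfolding Bl_def by (auto simp: simp_n_def)
  have "\<exists>x\<in>Bl. (h \<circ> rtr n) x = x"
    unfolding Bl_def
  proof (rule brouwer_nat)
    show "continuous_on {x. nn n x \<le> 1 \<and> (\<forall>i>n. x i = 0)} (h \<circ> rtr n)"
      by (rule continuous_on_compose[OF cont_rtr continuous_on_subset[OF conth]]) (auto simp: rtr_simp)
    show "(h \<circ> rtr n) ` {x. nn n x \<le> 1 \<and> (\<forall>i>n. x i = 0)} \<subseteq> {x. nn n x \<le> 1 \<and> (\<forall>i>n. x i = 0)}"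
      using simpB hS rtr_simp unfolding Bl_def by auto
  qed
  then obtain x where "x \<in> Bl" and fx: "h (rtr n x) = x" by auto
  have xS: "x \<in> simp_n n" using hS[OF rtr_simp] fx by metis
  then have hx: "h x = x" using fx rtr_id by metis
  obtain i where i: "i \<le> n" "0 < x i" "x \<in> E i" using kkm[OF xS] by blast
  then have "h x i = 0" by (simp add: h_def)
  then show False using hx i by simp
qed

lemma closed_simp_n: "closed (simp_n n)"
proof -
  have c: "continuous_on UNIV (\<lambda>x::nat\<Rightarrow>real. x i)" for i by simp
  have 1: "closed {x::nat\<Rightarrow>real. \<forall>i. 0 \<le> x i}"
  proof (rule closed_Collect_all)
    fix i show "closed {x::nat\<Rightarrow>real. 0 \<le> x i}" by (rule closed_Collect_le[OF continuous_on_const c])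
  qed
  have 2: "closed {x::nat\<Rightarrow>real. \<forall>i. n < i \<longrightarrow> x i = 0}"
  proof (rule closed_Collect_all)
    fix i show "closed {x::nat\<Rightarrow>real. n < i \<longrightarrow> x i = 0}"
    proof (cases "n < i")
      case True
      have "closed {x::nat\<Rightarrow>real. x i = 0}" by (rule closed_Collect_eq[OF c continuous_on_const])
      then show ?thesis using True by simp
    qed simp
  qed
  have cs: "continuous_on UNIV (\<lambda>x::nat\<Rightarrow>real. \<Sum>i\<le>n. x i)"
    by (rule continuous_on_sum) (rule c)
  have 3: "closed {x::nat\<Rightarrow>real. (\<Sum>i\<le>n. x i) = 1}"
    by (rule closed_Collect_eq[OF cs continuous_on_const])
  have "simp_n n = {x. \<forall>i. 0 \<le> x i} \<inter> {x. \<forall>i. n < i \<longrightarrow> x i = 0} \<inter> {x. (\<Sum>i\<le>n. x i) = 1}"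
    unfolding simp_n_def by blast
  then show ?thesis using closed_Int[OF closed_Int[OF 1 2] 3] by simp
qed

lemma compact_simp_n: "compact (simp_n n)"
proof -
  define T where "T i = (if i \<le> n then {0..1} else {0::real})" for i
  have "compactin (product_topology (\<lambda>i. euclidean) UNIV) (PiE UNIV T)"
    by (subst compactin_PiE) (auto simp: T_def)
  then have cT: "compact (PiE UNIV T)" by (simp add: euclidean_product_topology)
  have "simp_n n \<subseteq> PiE UNIV T"
    using simp_n_le1 by (fastforce simp: simp_n_def T_def PiE_def Pi_def not_le)
  then have "simp_n n = PiE UNIV T \<inter> simp_n n" by blast
  then show ?thesis using compact_Int_closed[OF cT closed_simp_n] by metis
qed

lemma tvs_add:
  fixes f g :: "'b::topological_space \<Rightarrow> 'a::{real_vector,topological_space}"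
  assumes "tvs TYPE('a)" "continuous_on S f" "continuous_on S g"
  shows "continuous_on S (\<lambda>x. f x + g x)"
proof -
  have "continuous_on UNIV (\<lambda>p::'a\<times>'a. fst p + snd p)" using assms(1) by (simp add: tvs_def)
  then show ?thesis
    using continuous_on_compose2[of UNIV "\<lambda>p::'a\<times>'a. fst p + snd p" S "\<lambda>x. (f x, g x)"]
      continuous_on_Pair[OF assms(2,3)] by auto
qed

lemma tvs_scale:
  fixes f :: "'b::topological_space \<Rightarrow> real" and g :: "'b \<Rightarrow> 'a::{real_vector,topological_space}"
  assumes "tvs TYPE('a)" "continuous_on S f" "continuous_on S g"
  shows "continuous_on S (\<lambda>x. f x *\<^sub>R g x)"
proof -
  have "continuous_on UNIV (\<lambda>p::real\<times>'a. fst p *\<^sub>R snd p)" using assms(1) by (simp add: tvs_def)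
  then show ?thesis
    using continuous_on_compose2[of UNIV "\<lambda>p::real\<times>'a. fst p *\<^sub>R snd p" S "\<lambda>x. (f x, g x)"]
      continuous_on_Pair[OF assms(2,3)] by auto
qed

lemma tvs_sum:
  fixes f :: "nat \<Rightarrow> 'b::topological_space \<Rightarrow> 'a::{real_vector,topological_space}"
  assumes "tvs TYPE('a)" "finite I" "\<And>i. i \<in> I \<Longrightarrow> continuous_on S (f i)"
  shows "continuous_on S (\<lambda>x. \<Sum>i\<in>I. f i x)"
  using assms(2,3)
proof (induction I rule: finite_induct)
  case empty then show ?case by (simp add: continuous_on_const)
next
  case (insert a I)
  then show ?case by (simp add: tvs_add[OF assms(1)])
qed

lemma kkm_tvs:
  fixes p :: "nat \<Rightarrow> 'a::{real_vector,topological_space}" and G :: "nat \<Rightarrow> 'a set" and n :: nat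
  assumes tvs: "tvs TYPE('a)"
    and cc: "\<And>i. i \<le> n \<Longrightarrow> compactly_closed (G i)"
    and kkm: "\<And>B. B \<subseteq> {..n} \<Longrightarrow> B \<noteq> {} \<Longrightarrow> convex hull (p ` B) \<subseteq> (\<Union>i\<in>B. G i)"
  shows "\<exists>z. \<forall>i\<le>n. z \<in> G i"
proof -
  define \<phi> where "\<phi> x = (\<Sum>i\<le>n. x i *\<^sub>R p i)" for x :: "nat \<Rightarrow> real"
  have cphi: "continuous_on UNIV \<phi>"
    unfolding \<phi>_def
    by (intro tvs_sum[OF tvs] tvs_scale[OF tvs] continuous_on_const finite_atMost continuous_on_product_coordinates)
  define Q where "Q = \<phi> ` simp_n n"
  have cQ: "compact Q" unfolding Q_def
    by (rule compact_continuous_image[OF continuous_on_subset[OF cphi] compact_simp_n]) auto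
  define E where "E i = simp_n n \<inter> \<phi> -` (G i \<inter> Q)" for i
  have clE: "closed (E i)" if "i \<le> n" for i
  proof -
    have "closedin (top_of_set Q) (G i \<inter> Q)" using cc[OF that] cQ unfolding compactly_closed_def by blast
    moreover have "\<phi> \<in> simp_n n \<rightarrow> Q" by (auto simp: Q_def)
    moreover have "continuous_on (simp_n n) \<phi>" using continuous_on_subset[OF cphi] by blast
    ultimately have "closedin (top_of_set (simp_n n)) (E i)" unfolding E_def
      using continuous_closedin_preimage_gen by blast
    then show ?thesis using closedin_closed_trans closed_simp_n by blast
  qed
  have "\<exists>x\<in>simp_n n. \<forall>i\<le>n. x \<in> E i"
  proof (rule kkm_nat[OF clE])
    fix x assume xS: "x \<in> simp_n n"
    define B where "B = {i. i \<le> n \<and> 0 < x i}"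
    have Bsub: "B \<subseteq> {..n}" by (auto simp: B_def)
    have z: "x i = 0" if "i \<in> {..n} - B" for i using that xS by (auto simp: B_def simp_n_def less_le)
    have sumB: "(\<Sum>i\<in>B. x i) = 1"
    proof -
      have "(\<Sum>i\<in>B. x i) = (\<Sum>i\<le>n. x i)"
        by (rule sum.mono_neutral_left) (use Bsub z in auto)
      then show ?thesis using xS by (simp add: simp_n_def)
    qed
    then have Bne: "B \<noteq> {}" by auto
    have phiB: "\<phi> x = (\<Sum>i\<in>B. x i *\<^sub>R p i)"
      unfolding \<phi>_def by (rule sum.mono_neutral_right) (use Bsub z in auto)
    have "\<phi> x \<in> convex hull (p ` B)"
      unfolding phiB
      by (rule convex_sum) (use sumB xS in \<open>auto simp: B_def simp_n_def intro: hull_inc\<close>)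
    then obtain i where i: "i \<in> B" "\<phi> x \<in> G i" using kkm[OF Bsub Bne] by blast
    have "\<phi> x \<in> Q" using xS by (simp add: Q_def)
    then show "\<exists>i\<le>n. 0 < x i \<and> x \<in> E i" using i xS by (auto simp: B_def E_def)
  qed
  then obtain x where "\<forall>i\<le>n. x \<in> E i" by blast
  then show ?thesis by (auto simp: E_def)
qed

hide_const (open) Wellorder_Constructions.cone

theorem corollary3p4:
  fixes D :: "'x::{real_vector,topological_space} set"
    and K :: "'k set"
    and C :: "'y::{real_vector,topological_space} set"
    and f :: "'x \<Rightarrow> 'k \<Rightarrow> 'y set"
    and g :: "'x \<Rightarrow> 'x \<Rightarrow> 'y set"
    and M :: "'x set" and L :: "'k set"
  assumes tvsX: "tvs TYPE('x)"
    and tvsY: "tvs TYPE('y)"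
    and convD: "convex D"
    and Kne: "K \<noteq> {}"
    and coneC: "cone C"
    and i: "\<forall>y\<in>K. compactly_closed {x\<in>D. f x y \<subseteq> C}"
    and ii: "\<forall>A. A \<noteq> {} \<and> finite A \<and> A \<subseteq> D \<longrightarrow>
               (\<forall>z\<in>convex hull A. \<exists>x\<in>A. g x z \<subseteq> uminus ` C)"
    and iii: "\<forall>y\<in>K. \<exists>z\<in>D. \<forall>x\<in>D. g z x \<subseteq> uminus ` C \<longrightarrow> f x y \<subseteq> C"
    and Mne: "M \<noteq> {}" and Mcpt: "compact M" and MD: "M \<subseteq> D"
    and Lfin: "finite L" and LK: "L \<subseteq> K"
    and iv: "\<forall>x\<in>D - M. \<exists>y\<in>L. \<not> f x y \<subseteq> C"
  shows "\<exists>xb\<in>M. \<forall>y\<in>K. f xb y \<subseteq> C"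
proof -
  define F where "F y = {x\<in>D. f x y \<subseteq> C}" for y
  obtain zf where zf: "\<forall>y\<in>K. zf y \<in> D \<and> (\<forall>x\<in>D. g (zf y) x \<subseteq> uminus ` C \<longrightarrow> f x y \<subseteq> C)"
    using iii by metis
  have fin: "\<Inter>(F ` Y) \<noteq> {}" if Y: "finite Y" "Y \<noteq> {}" "Y \<subseteq> K" for Y
  proof -
    obtain m :: nat and yy where Yeq: "Y = yy ` {i. i < m}" using finite_imp_nat_seg_image_inj_on[OF Y(1)] by metis
    then have "m \<noteq> 0" using Y(2) by auto
    define n where "n = m - 1"
    have "{i. i < m} = {..n}" using \<open>m \<noteq> 0\<close> by (auto simp: n_def)
    then have Yeq': "Y = yy ` {..n}" using Yeq by simp
    have yyK: "yy i \<in> K" if "i \<le> n" for i using that Yeq' Y(3) by auto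
    have "\<exists>z. \<forall>i\<le>n. z \<in> F (yy i)"
    proof (rule kkm_tvs[OF tvsX, of n "\<lambda>i. F (yy i)" "\<lambda>i. zf (yy i)"])
      fix j assume "j \<le> n"
      then show "compactly_closed (F (yy j))" using i yyK unfolding F_def by blast
    next
      fix B assume B: "B \<subseteq> {..n}" "B \<noteq> {}"
      show "convex hull ((\<lambda>i. zf (yy i)) ` B) \<subseteq> (\<Union>i\<in>B. F (yy i))"
      proof
        fix z assume z: "z \<in> convex hull ((\<lambda>i. zf (yy i)) ` B)"
        have AD: "(\<lambda>i. zf (yy i)) ` B \<subseteq> D" using B zf yyK by auto
        have finB: "finite B" using B(1) finite_subset by blast
        obtain x where x: "x \<in> (\<lambda>i. zf (yy i)) ` B" "g x z \<subseteq> uminus ` C"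
          using ii[rule_format, of "(\<lambda>i. zf (yy i)) ` B" z] AD B(2) finB z by blast
        then obtain j where j: "j \<in> B" "x = zf (yy j)" by blast
        have "convex hull ((\<lambda>i. zf (yy i)) ` B) \<subseteq> D" by (rule hull_minimal[of _ D convex]) (use AD convD in auto)
        then have zD: "z \<in> D" using z by blast
        have "f z (yy j) \<subseteq> C" using zf yyK[of j] j B(1) x(2) zD by auto
        then show "z \<in> (\<Union>i\<in>B. F (yy i))" using j zD by (auto simp: F_def)
      qed
    qed
    then obtain z where "\<forall>i\<le>n. z \<in> F (yy i)" by blast
    then show ?thesis using Yeq' by auto
  qed
  have "\<forall>y\<in>K. \<exists>T. closed T \<and> F y \<inter> M = M \<inter> T"
  proof
    fix y assume "y \<in> K"
    then have "closedin (top_of_set M) (F y \<inter> M)" using i Mcpt unfolding F_def compactly_closed_def by blast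
    then show "\<exists>T. closed T \<and> F y \<inter> M = M \<inter> T" by (simp add: closedin_closed)
  qed
  then obtain T where T: "\<forall>y\<in>K. closed (T y) \<and> F y \<inter> M = M \<inter> T y" by metis
  have "M \<inter> \<Inter>(T ` K) \<noteq> {}"
  proof (rule compact_imp_fip[OF Mcpt])
    show "\<And>S. S \<in> T ` K \<Longrightarrow> closed S" using T by auto
    fix F' assume F': "finite F'" "F' \<subseteq> T ` K"
    then obtain Y' where Y': "Y' \<subseteq> K" "finite Y'" "F' = T ` Y'" by (meson finite_subset_image)
    obtain k0 where "k0 \<in> K" using Kne by blast
    define Y where "Y = insert k0 (Y' \<union> L)"
    have "\<Inter>(F ` Y) \<noteq> {}" by (rule fin) (use Y' Lfin LK \<open>k0 \<in> K\<close> in \<open>auto simp: Y_def\<close>)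
    then obtain x where x: "\<forall>y\<in>Y. x \<in> F y" by blast
    have xD: "x \<in> D" using x by (auto simp: Y_def F_def)
    have xM: "x \<in> M"
    proof (rule ccontr)
      assume "x \<notin> M"
      then obtain y where "y \<in> L" "\<not> f x y \<subseteq> C" using iv xD by blast
      then show False using x by (auto simp: Y_def F_def)
    qed
    have "x \<in> M \<inter> \<Inter>F'"
    proof -
      have "x \<in> T y" if "y \<in> Y'" for y
      proof -
        have "x \<in> F y \<inter> M" using x xM that by (auto simp: Y_def)
        then show ?thesis using T Y'(1) that by auto
      qed
      then show ?thesis using xM Y'(3) by auto
    qed
    then show "M \<inter> \<Inter>F' \<noteq> {}" by blast
  qed
  then obtain x where x: "x \<in> M" "\<forall>y\<in>K. x \<in> T y" by blast
  have "\<forall>y\<in>K. f x y \<subseteq> C"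
  proof
    fix y assume y: "y \<in> K"
    then have "x \<in> F y \<inter> M" using T x by auto
    then show "f x y \<subseteq> C" by (auto simp: F_def)
  qed
  then show ?thesis using x(1) by blast
qed

end
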